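(* Let $\mathbb{G}$ be an undirected, unweighted random network model that is of finite expected degree (FED). Then $\mathbb{G}$ is uniformly sparse (US).
   Context: A random network model $\mathbb{G}$ assigns to every $n\in\mathbb{N}$ a probability distribution over graphs with $n$ nodes; $G_n$ denotes a graph sampled from it. "For all sufficiently large $n$" refers to this index. For a node $u$, $\deg(u)$ is its degree. Let $\boldsymbol{p}_n(d)$ be the probability that $\deg(u)=d$ when $G_n$ is sampled from $\mathbb{G}$ and $u$ is chosen uniformly at random from $G_n$. $\mathbb{G}$ is FED if there is a probability distribution $\boldsymbol{p}$ on $\mathbb{N}$ with finite mean such that (F1) $\lim_{n\to\infty}\boldsymbol{p}_n(d)=\boldsymbol{p}(d)$ for each $d\in\mathbb{N}$, and (F2) $\lim_{n\to\infty}\sum_d d\,\boldsymbol{p}_n(d)=\sum_d d\,\boldsymbol{p}(d)$. A set of nodes $U$ is a node cover of a set of edges $E$ if every edge of $E$ is incident with at least one node of $U$. $\mathbb{G}$ is US if for each $\epsilon>0$ there is a constant $C_\epsilon$ such that for all sufficiently large $n$ the following holds with probability at least $1-\epsilon$: for any set of $y\ge \epsilon n$ edges of $G_n$, every node cover of that set has size at least $y/C_\epsilon$. *)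

theory Defs
  imports "HOL-Probability.Probability"
begin

definition is_graph :: "nat \<Rightarrow> nat set set \<Rightarrow> bool" where
  "is_graph n E \<longleftrightarrow> (\<forall>e\<in>E. card e = 2 \<and> e \<subseteq> {..<n})"

definition random_network_model :: "(nat \<Rightarrow> nat set set pmf) \<Rightarrow> bool" where
  "random_network_model G \<longleftrightarrow> (\<forall>n. \<forall>E\<in>set_pmf (G n). is_graph n E)"

definition deg :: "nat set set \<Rightarrow> nat \<Rightarrow> nat" where
  "deg E u = card {e\<in>E. u \<in> e}"

text \<open>p_n(d): probability that a uniformly random node of G_n has degree d.\<close>
definition deg_prob :: "(nat \<Rightarrow> nat set set pmf) \<Rightarrow> nat \<Rightarrow> nat \<Rightarrow> real" where
  "deg_prob G n d =
     measure_pmf.expectation (G n) (\<lambda>E. real (card {u\<in>{..<n}. deg E u = d}) / real n)"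

definition FED :: "(nat \<Rightarrow> nat set set pmf) \<Rightarrow> bool" where
  "FED G \<longleftrightarrow> (\<exists>p :: nat \<Rightarrow> real.
      (\<forall>d. p d \<ge> 0) \<and> p sums 1 \<and> summable (\<lambda>d. real d * p d) \<and>
      (\<forall>d. (\<lambda>n. deg_prob G n d) \<longlonglongrightarrow> p d) \<and>
      (\<lambda>n. \<Sum>d. real d * deg_prob G n d) \<longlonglongrightarrow> (\<Sum>d. real d * p d))"

definition node_cover :: "nat set \<Rightarrow> nat set set \<Rightarrow> bool" where
  "node_cover U Y \<longleftrightarrow> (\<forall>e\<in>Y. e \<inter> U \<noteq> {})"

definition US :: "(nat \<Rightarrow> nat set set pmf) \<Rightarrow> bool" where
  "US G \<longleftrightarrow> (\<forall>\<epsilon>>0. \<exists>C>0. \<forall>\<^sub>F n in sequentially.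
      measure_pmf.prob (G n)
        {E. \<forall>Y\<subseteq>E. real (card Y) \<ge> \<epsilon> * real n \<longrightarrow>
              (\<forall>U\<subseteq>{..<n}. node_cover U Y \<longrightarrow> real (card U) \<ge> real (card Y) / C)}
      \<ge> 1 - \<epsilon>)"

end

theory Submission
  imports Defs
begin


lemma supp_sub:
  assumes "random_network_model G" "E \<in> set_pmf (G n)"
  shows "E \<subseteq> Pow {..<n}"
  using assms unfolding random_network_model_def is_graph_def by blast

lemma supp_fin:
  assumes "random_network_model G"
  shows "finite (set_pmf (G n))"
proof -
  have "set_pmf (G n) \<subseteq> Pow (Pow {..<n})" using supp_sub[OF assms] by blast
  then show ?thesis by (rule finite_subset) simp
qed

lemma deg_le:
  assumes "E \<subseteq> Pow {..<n}"
  shows "deg E u \<le> 2 ^ n"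
proof -
  have "deg E u \<le> card E" unfolding deg_def
    by (rule card_mono) (use assms finite_subset in auto)
  also have "\<dots> \<le> card (Pow {..<(n::nat)})" by (rule card_mono) (use assms in auto)
  finally show ?thesis by (simp add: card_Pow)
qed

lemma sum_fib:
  fixes f :: "nat \<Rightarrow> nat"
  assumes "finite V" "finite A"
  shows "(\<Sum>d\<in>A. real d * real (card {u\<in>V. f u = d})) = (\<Sum>u\<in>{u\<in>V. f u \<in> A}. real (f u))"
proof -
  have "(\<Sum>u\<in>{u\<in>V. f u \<in> A}. real (f u)) = (\<Sum>d\<in>A. \<Sum>u\<in>{x\<in>{u\<in>V. f u \<in> A}. f x = d}. real (f u))"
    by (rule sum.group[symmetric]) (use assms in auto)
  also have "\<dots> = (\<Sum>d\<in>A. real d * real (card {u\<in>V. f u = d}))"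
  proof (rule sum.cong)
    fix d assume "d \<in> A"
    then have "{x\<in>{u\<in>V. f u \<in> A}. f x = d} = {u\<in>V. f u = d}" by auto
    then show "(\<Sum>u\<in>{x\<in>{u\<in>V. f u \<in> A}. f x = d}. real (f u)) = real d * real (card {u\<in>V. f u = d})"
      by simp
  qed simp
  finally show ?thesis ..
qed

lemma L:
  assumes G: "random_network_model G" and A: "finite A"
  shows "(\<Sum>d\<in>A. real d * deg_prob G n d) =
    measure_pmf.expectation (G n) (\<lambda>E. (\<Sum>u\<in>{u\<in>{..<n}. deg E u \<in> A}. real (deg E u)) / real n)"
proof -
  have int: "integrable (measure_pmf (G n)) f" for f :: "_ \<Rightarrow> real"
    by (rule integrable_measure_pmf_finite) (rule supp_fin[OF G])
  have "(\<Sum>d\<in>A. real d * deg_prob G n d) =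
     (\<Sum>d\<in>A. measure_pmf.expectation (G n) (\<lambda>E. real d * (real (card {u\<in>{..<n}. deg E u = d}) / real n)))"
    unfolding deg_prob_def by simp
  also have "\<dots> = measure_pmf.expectation (G n) (\<lambda>E. \<Sum>d\<in>A. real d * (real (card {u\<in>{..<n}. deg E u = d}) / real n))"
    by (rule Bochner_Integration.integral_sum[symmetric]) (rule int)
  also have "\<dots> = measure_pmf.expectation (G n) (\<lambda>E. (\<Sum>u\<in>{u\<in>{..<n}. deg E u \<in> A}. real (deg E u)) / real n)"
  proof (rule Bochner_Integration.integral_cong[OF refl])
    fix E
    have "(\<Sum>d\<in>A. real d * (real (card {u\<in>{..<n}. deg E u = d}) / real n))
        = (\<Sum>d\<in>A. real d * real (card {u\<in>{..<n}. deg E u = d})) / real n"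
      by (simp add: sum_divide_distrib)
    also have "\<dots> = (\<Sum>u\<in>{u\<in>{..<n}. deg E u \<in> A}. real (deg E u)) / real n"
      using sum_fib[of "{..<n}" A "deg E"] A by simp
    finally show "(\<Sum>d\<in>A. real d * (real (card {u\<in>{..<n}. deg E u = d}) / real n))
        = (\<Sum>u\<in>{u\<in>{..<n}. deg E u \<in> A}. real (deg E u)) / real n" .
  qed
  finally show ?thesis .
qed



lemma det:
  assumes E: "E \<subseteq> Pow {..<n}"
    and hi: "(\<Sum>u\<in>{u\<in>{..<n}. D \<le> deg E u}. real (deg E u)) \<le> \<epsilon> * real n / 2"
    and Y: "Y \<subseteq> E" and Ybig: "\<epsilon> * real n \<le> real (card Y)"
    and U: "U \<subseteq> {..<n}" and cov: "node_cover U Y"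
  shows "real (card Y) / (2 * (real D + 1)) \<le> real (card U)"
proof -
  have finE: "finite E" using E by (rule finite_subset) simp
  have finY: "finite Y" using Y finE finite_subset by blast
  have finU: "finite U" using U finite_subset by blast
  have "Y \<subseteq> (\<Union>u\<in>U. {e\<in>Y. u \<in> e})" using cov unfolding node_cover_def by blast
  then have "card Y \<le> card (\<Union>u\<in>U. {e\<in>Y. u \<in> e})"
    by (rule card_mono[rotated]) (use finU finY in auto)
  also have "\<dots> \<le> (\<Sum>u\<in>U. card {e\<in>Y. u \<in> e})" by (rule card_UN_le[OF finU])
  finally have c1: "real (card Y) \<le> (\<Sum>u\<in>U. real (card {e\<in>Y. u \<in> e}))"
    by (metis of_nat_le_iff of_nat_sum)
  have le_deg: "card {e\<in>Y. u \<in> e} \<le> deg E u" for u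
    unfolding deg_def by (rule card_mono) (use finE Y finite_subset in auto)
  have split: "(\<Sum>u\<in>U. real (card {e\<in>Y. u \<in> e})) =
      (\<Sum>u\<in>{u\<in>U. D \<le> deg E u}. real (card {e\<in>Y. u \<in> e})) +
      (\<Sum>u\<in>{u\<in>U. \<not> D \<le> deg E u}. real (card {e\<in>Y. u \<in> e}))"
  proof -
    have "U = {u\<in>U. D \<le> deg E u} \<union> {u\<in>U. \<not> D \<le> deg E u}" by blast
    then show ?thesis
      by (metis (no_types, lifting) sum.union_disjoint finU finite_Un disjoint_iff mem_Collect_eq)
  qed
  have "(\<Sum>u\<in>{u\<in>U. D \<le> deg E u}. real (card {e\<in>Y. u \<in> e})) \<le> (\<Sum>u\<in>{u\<in>U. D \<le> deg E u}. real (deg E u))"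
    by (rule sum_mono) (simp add: le_deg)
  also have "\<dots> \<le> (\<Sum>u\<in>{u\<in>{..<n}. D \<le> deg E u}. real (deg E u))"
    by (rule sum_mono2) (use U in auto)
  finally have h1: "(\<Sum>u\<in>{u\<in>U. D \<le> deg E u}. real (card {e\<in>Y. u \<in> e})) \<le> \<epsilon> * real n / 2"
    using hi by linarith
  have "(\<Sum>u\<in>{u\<in>U. \<not> D \<le> deg E u}. real (card {e\<in>Y. u \<in> e})) \<le> (\<Sum>u\<in>{u\<in>U. \<not> D \<le> deg E u}. real D)"
    by (rule sum_mono) (use le_deg in \<open>fastforce intro: le_trans[OF _ less_imp_le]\<close>)
  also have "\<dots> = real (card {u\<in>U. \<not> D \<le> deg E u}) * real D" by simp
  also have "\<dots> \<le> real (card U) * real D"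
    by (intro mult_right_mono) (use finU in \<open>auto intro: card_mono\<close>)
  finally have h2: "(\<Sum>u\<in>{u\<in>U. \<not> D \<le> deg E u}. real (card {e\<in>Y. u \<in> e})) \<le> real (card U) * real D" .
  have "real (card Y) \<le> 2 * (real D + 1) * real (card U)"
  proof -
    have "real (card Y) \<le> 2 * (real (card U) * real D)" using c1 split h1 h2 Ybig by linarith
    also have "\<dots> \<le> 2 * (real D + 1) * real (card U)" by (simp add: algebra_simps)
    finally show ?thesis .
  qed
  then show ?thesis by (simp add: divide_le_eq mult.commute)
qed


lemma deg_prob_zero:
  assumes G: "random_network_model G" and d: "2 ^ n < d"
  shows "deg_prob G n d = 0"
proof -
  have "deg_prob G n d = measure_pmf.expectation (G n) (\<lambda>E. 0::real)"
    unfolding deg_prob_def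
  proof (rule integral_cong_AE)
    show "AE E in measure_pmf (G n). real (card {u \<in> {..<n}. deg E u = d}) / real n = 0"
    proof (rule AE_pmfI)
      fix E assume "E \<in> set_pmf (G n)"
      then have "E \<subseteq> Pow {..<n}" by (rule supp_sub[OF G])
      then have "\<And>u. deg E u \<noteq> d" using deg_le[of E n] d by (metis not_le)
      then show "real (card {u \<in> {..<n}. deg E u = d}) / real n = 0" by simp
    qed
  qed simp_all
  then show ?thesis by simp
qed

theorem lemma1:
  fixes G :: "nat \<Rightarrow> nat set set pmf"
  assumes "random_network_model G"
      and "FED G"
  shows "US G"
proof -
  note G = assms(1)
  obtain p :: "nat \<Rightarrow> real" where sm: "summable (\<lambda>d. real d * p d)"
    and conv: "\<And>d. (\<lambda>n. deg_prob G n d) \<longlonglongrightarrow> p d"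
    and mconv: "(\<lambda>n. \<Sum>d. real d * deg_prob G n d) \<longlonglongrightarrow> (\<Sum>d. real d * p d)"
    using assms(2) unfolding FED_def by blast
  define m where "m = (\<Sum>d. real d * p d)"
  show ?thesis unfolding US_def
  proof (intro allI impI)
    fix \<epsilon> :: real assume ep: "\<epsilon> > 0"
    define \<delta> where "\<delta> = \<epsilon> * \<epsilon> / 4"
    have dpos: "\<delta> > 0" using ep by (simp add: \<delta>_def)
    have "(\<lambda>D. \<Sum>d<D. real d * p d) \<longlonglongrightarrow> m" unfolding m_def by (rule summable_LIMSEQ[OF sm])
    then obtain D0 where D0: "\<And>D. D \<ge> D0 \<Longrightarrow> norm ((\<Sum>d<D. real d * p d) - m) < \<delta> / 2"
      using dpos unfolding LIMSEQ_iff by (meson half_gt_zero)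
    define D where "D = D0"
    have D: "\<bar>(\<Sum>d<D. real d * p d) - m\<bar> < \<delta> / 2" using D0[of D] unfolding D_def by simp
    have lim: "(\<lambda>n. (\<Sum>d. real d * deg_prob G n d) - (\<Sum>d<D. real d * deg_prob G n d))
        \<longlonglongrightarrow> m - (\<Sum>d<D. real d * p d)"
      unfolding m_def by (intro tendsto_intros mconv conv)
    have "m - (\<Sum>d<D. real d * p d) < \<delta>" using D by linarith
    then have ev1: "\<forall>\<^sub>F n in sequentially. (\<Sum>d. real d * deg_prob G n d) - (\<Sum>d<D. real d * deg_prob G n d) < \<delta>"
      by (rule order_tendstoD(2)[OF lim])
    define h where "h n E = (\<Sum>u\<in>{u\<in>{..<n}. D \<le> deg E u}. real (deg E u)) / real n" for n E
    define C where "C = 2 * (real D + 1)"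
    have Cpos: "C > 0" unfolding C_def by simp
    have main: "measure_pmf.prob (G n)
        {E. \<forall>Y\<subseteq>E. real (card Y) \<ge> \<epsilon> * real n \<longrightarrow>
              (\<forall>U\<subseteq>{..<n}. node_cover U Y \<longrightarrow> real (card U) \<ge> real (card Y) / C)}
      \<ge> 1 - \<epsilon>"
      if n1: "n \<ge> 1" and nd: "(\<Sum>d. real d * deg_prob G n d) - (\<Sum>d<D. real d * deg_prob G n d) < \<delta>" for n
    proof -
      define B where "B = D + 2 ^ n + 1"
      have "(\<Sum>d. real d * deg_prob G n d) = (\<Sum>d<B. real d * deg_prob G n d)"
        by (rule suminf_finite) (auto simp: B_def intro!: deg_prob_zero[OF G])
      have "(\<Sum>d. real d * deg_prob G n d) - (\<Sum>d<D. real d * deg_prob G n d)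
          = (\<Sum>d\<in>{..<B} - {..<D}. real d * deg_prob G n d)"
      proof -
        have "(\<Sum>d\<in>{..<B} - {..<D}. real d * deg_prob G n d) = (\<Sum>d<B. real d * deg_prob G n d) - (\<Sum>d<D. real d * deg_prob G n d)"
          by (rule sum_diff) (auto simp: B_def)
        then show ?thesis using \<open>(\<Sum>d. real d * deg_prob G n d) = (\<Sum>d<B. real d * deg_prob G n d)\<close> by simp
      qed
      also have "\<dots> = measure_pmf.expectation (G n)
          (\<lambda>E. (\<Sum>u\<in>{u\<in>{..<n}. deg E u \<in> {..<B} - {..<D}}. real (deg E u)) / real n)"
        by (rule L[OF G]) simp
      also have "\<dots> = measure_pmf.expectation (G n) (h n)"
      proof (rule integral_cong_AE)
        show "AE E in measure_pmf (G n). (\<Sum>u\<in>{u\<in>{..<n}. deg E u \<in> {..<B} - {..<D}}. real (deg E u)) / real n = h n E"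
        proof (rule AE_pmfI)
          fix E assume "E \<in> set_pmf (G n)"
          then have "E \<subseteq> Pow {..<n}" by (rule supp_sub[OF G])
          have "deg E u < B" for u
          proof -
            have "deg E u \<le> 2 ^ n" using deg_le[OF \<open>E \<subseteq> Pow {..<n}\<close>] .
            then show ?thesis unfolding B_def by linarith
          qed
          then have "{u\<in>{..<n}. deg E u \<in> {..<B} - {..<D}} = {u\<in>{..<n}. D \<le> deg E u}" by auto
          then show "(\<Sum>u\<in>{u\<in>{..<n}. deg E u \<in> {..<B} - {..<D}}. real (deg E u)) / real n = h n E"
            unfolding h_def by simp
        qed
      qed simp_all
      finally have Eh: "measure_pmf.expectation (G n) (h n) < \<delta>" using nd by simp
      have "measure_pmf.prob (G n) {E \<in> space (measure_pmf (G n)). \<epsilon> / 2 \<le> h n E}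
          \<le> measure_pmf.expectation (G n) (h n) / (\<epsilon> / 2)"
        by (rule integral_Markov_inequality_measure)
           (auto simp: h_def ep intro!: integrable_measure_pmf_finite supp_fin[OF G] sum_nonneg divide_nonneg_nonneg)
      also have "\<dots> \<le> \<delta> / (\<epsilon> / 2)" using Eh ep by (intro divide_right_mono) auto
      also have "\<dots> = \<epsilon> / 2" using ep by (simp add: \<delta>_def field_simps)
      finally have bad: "measure_pmf.prob (G n) {E. \<epsilon> / 2 \<le> h n E} \<le> \<epsilon> / 2" by simp
      let ?S = "{E. \<forall>Y\<subseteq>E. real (card Y) \<ge> \<epsilon> * real n \<longrightarrow>
              (\<forall>U\<subseteq>{..<n}. node_cover U Y \<longrightarrow> real (card U) \<ge> real (card Y) / C)}"
      have sub: "(UNIV - {E. \<epsilon> / 2 \<le> h n E}) \<inter> set_pmf (G n) \<subseteq> ?S"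
      proof (safe)
        fix E Y U assume E: "E \<in> set_pmf (G n)" and hE: "\<not> \<epsilon> / 2 \<le> h n E" and Y: "Y \<subseteq> E"
          and Yb: "\<epsilon> * real n \<le> real (card Y)" and U: "U \<subseteq> {..<n}" and cov: "node_cover U Y"
        have Ep: "E \<subseteq> Pow {..<n}" using E by (rule supp_sub[OF G])
        have npos: "real n > 0" using n1 by simp
        have "(\<Sum>u\<in>{u\<in>{..<n}. D \<le> deg E u}. real (deg E u)) \<le> \<epsilon> * real n / 2"
        proof -
          have "(\<Sum>u\<in>{u\<in>{..<n}. D \<le> deg E u}. real (deg E u)) / real n < \<epsilon> / 2"
            using hE unfolding h_def by linarith
          then have "(\<Sum>u\<in>{u\<in>{..<n}. D \<le> deg E u}. real (deg E u)) < \<epsilon> / 2 * real n"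
            by (simp only: pos_divide_less_eq[OF npos])
          then show ?thesis by simp
        qed
        from det[OF Ep this Y Yb U cov] show "real (card Y) / C \<le> real (card U)"
          unfolding C_def .
      qed
      have "1 - \<epsilon> \<le> 1 - measure_pmf.prob (G n) {E. \<epsilon> / 2 \<le> h n E}" using bad ep by linarith
      also have "\<dots> = measure_pmf.prob (G n) (UNIV - {E. \<epsilon> / 2 \<le> h n E})"
        using measure_pmf.prob_compl[of "{E. \<epsilon> / 2 \<le> h n E}" "G n"] by simp
      also have "\<dots> = measure_pmf.prob (G n) ((UNIV - {E. \<epsilon> / 2 \<le> h n E}) \<inter> set_pmf (G n))"
        by (rule measure_Int_set_pmf[symmetric])
      also have "\<dots> \<le> measure_pmf.prob (G n) ?S"
        by (rule measure_pmf.finite_measure_mono[OF sub]) simp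
      finally show ?thesis .
    qed
    have "\<forall>\<^sub>F n in sequentially. n \<ge> 1" by (rule eventually_ge_at_top)
    with ev1 have "\<forall>\<^sub>F n in sequentially. measure_pmf.prob (G n)
        {E. \<forall>Y\<subseteq>E. real (card Y) \<ge> \<epsilon> * real n \<longrightarrow>
              (\<forall>U\<subseteq>{..<n}. node_cover U Y \<longrightarrow> real (card U) \<ge> real (card Y) / C)}
      \<ge> 1 - \<epsilon>"
      by eventually_elim (rule main)
    with Cpos show "\<exists>C>0. \<forall>\<^sub>F n in sequentially. measure_pmf.prob (G n)
        {E. \<forall>Y\<subseteq>E. real (card Y) \<ge> \<epsilon> * real n \<longrightarrow>
              (\<forall>U\<subseteq>{..<n}. node_cover U Y \<longrightarrow> real (card U) \<ge> real (card Y) / C)}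
      \<ge> 1 - \<epsilon>" by blast
  qed
qed

end
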